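(* Let $d\ge 1$ and $2\le n_1\le n_2\le\cdots\le n_d$ be integers, and let $G=P_{n_1}\times P_{n_2}\times\cdots\times P_{n_d}$. Then $$\sigma_T(G)\le 2\left(\left\lfloor\tfrac{n_1}{2}\right\rfloor+\left\lfloor\tfrac{n_2}{2}\right\rfloor+\cdots+\left\lfloor\tfrac{n_{d-1}}{2}\right\rfloor\right)+1.$$
   Context: $P_n$ is the path on $n$ vertices and $\times$ is the Cartesian product, so $G$ is the $d$-dimensional grid with vertex set $\{(x_1,\dots,x_d): x_i\in\{1,\dots,n_i\}\}$, two vertices adjacent iff they differ by $1$ in exactly one coordinate and agree in all others. For a spanning tree $T$ of a connected graph $G$, $d_T(u,v)$ is the distance between $u$ and $v$ in $T$, $\sigma_T(G,T):=\max_{uv\in E(G)} d_T(u,v)$, and $\sigma_T(G):=\min\{\sigma_T(G,T): T \text{ a spanning tree of } G\}$. An empty sum is $0$. *)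

theory Defs
  imports Main
begin

definition walk :: "'a set set \<Rightarrow> 'a list \<Rightarrow> bool" where
  "walk E xs \<longleftrightarrow> xs \<noteq> [] \<and> (\<forall>i. Suc i < length xs \<longrightarrow> {xs ! i, xs ! Suc i} \<in> E)"

definition walk_betw :: "'a set set \<Rightarrow> 'a \<Rightarrow> 'a list \<Rightarrow> 'a \<Rightarrow> bool" where
  "walk_betw E u xs v \<longleftrightarrow> walk E xs \<and> hd xs = u \<and> last xs = v"

definition connected_graph :: "'a set \<Rightarrow> 'a set set \<Rightarrow> bool" where
  "connected_graph V E \<longleftrightarrow> V \<noteq> {} \<and>
     (\<forall>u\<in>V. \<forall>v\<in>V. \<exists>xs. walk_betw E u xs v \<and> set xs \<subseteq> V)"

definition has_cycle :: "'a set set \<Rightarrow> bool" where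
  "has_cycle E \<longleftrightarrow> (\<exists>xs. length xs \<ge> 3 \<and> distinct xs \<and> walk E (xs @ [hd xs]))"

definition spanning_tree :: "'a set \<Rightarrow> 'a set set \<Rightarrow> 'a set set \<Rightarrow> bool" where
  "spanning_tree V E T \<longleftrightarrow> T \<subseteq> E \<and> connected_graph V T \<and> \<not> has_cycle T"

definition gdist :: "'a set set \<Rightarrow> 'a \<Rightarrow> 'a \<Rightarrow> nat" where
  "gdist T u v = (LEAST k. \<exists>xs. walk_betw T u xs v \<and> length xs = Suc k)"

definition stretch :: "'a set set \<Rightarrow> 'a set set \<Rightarrow> nat" where
  "stretch E T = Max {gdist T u v | u v. {u, v} \<in> E \<and> u \<noteq> v}"

definition tree_spanner_index :: "'a set \<Rightarrow> 'a set set \<Rightarrow> nat" where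
  "tree_spanner_index V E = Min {stretch E T | T. spanning_tree V E T}"

text \<open>The grid P_{n_1} x ... x P_{n_d}; vertices are functions nat => nat,
  with x i in {1..n_i} for i < d and x i = 0 for i >= d.\<close>
definition grid_vertices :: "nat list \<Rightarrow> (nat \<Rightarrow> nat) set" where
  "grid_vertices ns = {x. (\<forall>i<length ns. 1 \<le> x i \<and> x i \<le> ns ! i) \<and> (\<forall>i\<ge>length ns. x i = 0)}"

definition grid_edges :: "nat list \<Rightarrow> (nat \<Rightarrow> nat) set set" where
  "grid_edges ns = {{x, y} | x y. x \<in> grid_vertices ns \<and> y \<in> grid_vertices ns \<and>
      (\<exists>i<length ns. (x i + 1 = y i) \<and> (\<forall>j. j \<noteq> i \<longrightarrow> x j = y j))}"

end

theory Submission
  imports Defs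
begin



lemma walk_Cons: "walk E (x # xs) \<longleftrightarrow> (xs = [] \<or> ({x, hd xs} \<in> E \<and> walk E xs))"
proof (cases xs)
  case Nil then show ?thesis by (simp add: walk_def)
next
  case (Cons y ys)
  show ?thesis
  proof
    assume a: "walk E (x # xs)"
    have "Suc 0 < length (x # xs)" using Cons by simp
    then have "{(x#xs) ! 0, (x#xs) ! Suc 0} \<in> E" using a unfolding walk_def by blast
    then have "{x, hd xs} \<in> E" using Cons by simp
    moreover have "walk E xs" unfolding walk_def
    proof (intro conjI allI impI)
      fix i assume "Suc i < length xs"
      then have "Suc (Suc i) < length (x # xs)" by simp
      then have "{(x#xs) ! Suc i, (x#xs) ! Suc (Suc i)} \<in> E" using a unfolding walk_def by blast
      then show "{xs ! i, xs ! Suc i} \<in> E" by simp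
    qed (simp add: Cons)
    ultimately show "xs = [] \<or> ({x, hd xs} \<in> E \<and> walk E xs)" by blast
  next
    assume b: "xs = [] \<or> ({x, hd xs} \<in> E \<and> walk E xs)"
    then have e: "{x, y} \<in> E" and w: "walk E (y#ys)" using Cons by auto
    show "walk E (x # xs)" unfolding walk_def
    proof (intro conjI allI impI)
      fix i assume "Suc i < length (x # xs)"
      then show "{(x # xs) ! i, (x # xs) ! Suc i} \<in> E"
        using e w Cons unfolding walk_def by (cases i) auto
    qed simp
  qed
qed

lemma walk_append:
  assumes "walk E xs" "walk E ys" "last xs = hd ys"
  shows "walk E (xs @ tl ys)"
  using assms
proof (induction xs)
  case Nil then show ?case by (simp add: walk_def)
next
  case (Cons a xs)
  show ?case
  proof (cases xs)
    case Nil
    then have "ys = a # tl ys" using Cons.prems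
      by (metis last_ConsL list.collapse walk_def)
    then show ?thesis using Cons.prems Nil by simp
  next
    case (Cons b zs)
    then have "{a, b} \<in> E" "walk E xs" using Cons.prems(1) by (auto simp: walk_Cons)
    then have "walk E (xs @ tl ys)" using Cons.IH Cons.prems Cons by simp
    then show ?thesis using \<open>{a,b} \<in> E\<close> Cons by (simp add: walk_Cons)
  qed
qed

lemma walk_rev: assumes "walk E xs" shows "walk E (rev xs)"
  unfolding walk_def
proof (intro conjI allI impI)
  show "rev xs \<noteq> []" using assms by (simp add: walk_def)
next
  fix i assume i: "Suc i < length (rev xs)"
  define n where "n = length xs"
  define j where "j = n - 2 - i"
  have i': "Suc i < n" using i by (simp add: n_def)
  have j1: "Suc j < n" "n - Suc i = Suc j" "n - Suc (Suc i) = j" using i' by (auto simp: j_def)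
  have "{xs ! j, xs ! Suc j} \<in> E"
    using assms j1(1) unfolding walk_def n_def by blast
  moreover have "rev xs ! i = xs ! Suc j" "rev xs ! Suc i = xs ! j"
    using i' j1 by (auto simp: rev_nth n_def)
  ultimately show "{rev xs ! i, rev xs ! Suc i} \<in> E" by (simp add: insert_commute)
qed

lemma gdist_le: assumes "walk_betw T u xs v" shows "gdist T u v \<le> length xs - 1"
proof -
  have "xs \<noteq> []" using assms by (simp add: walk_betw_def walk_def)
  then have "\<exists>ys. walk_betw T u ys v \<and> length ys = Suc (length xs - 1)" using assms by (intro exI[of _ xs]) auto
  then show ?thesis unfolding gdist_def by (rule Least_le)
qed




definition ptree :: "'a set \<Rightarrow> 'a \<Rightarrow> ('a \<Rightarrow> 'a) \<Rightarrow> 'a set set" where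
  "ptree V r p = {{x, p x} | x. x \<in> V \<and> x \<noteq> r}"

fun pw :: "('a \<Rightarrow> 'a) \<Rightarrow> 'a \<Rightarrow> nat \<Rightarrow> 'a list" where
  "pw p x 0 = [x]"
| "pw p x (Suc k) = x # pw p (p x) k"

lemma pw_len[simp]: "length (pw p x k) = Suc k"
  by (induction k arbitrary: x) auto

lemma pw_hd[simp]: "hd (pw p x k) = x"
  by (cases k) auto

lemma pw_ne[simp]: "pw p x k \<noteq> []"
  by (cases k) auto

lemma pw_last: "last (pw p x k) = (p ^^ k) x"
  by (induction k arbitrary: x) (simp_all add: funpow_swap1)

lemma pw_walk:
  assumes "\<forall>i<k. (p ^^ i) x \<in> V \<and> (p ^^ i) x \<noteq> r"
    and "\<forall>y\<in>V. y \<noteq> r \<longrightarrow> p y \<in> V" and "x \<in> V"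
  shows "walk (ptree V r p) (pw p x k) \<and> set (pw p x k) \<subseteq> V"
  using assms(1,3)
proof (induction k arbitrary: x)
  case 0 then show ?case by (simp add: walk_def)
next
  case (Suc k)
  have x: "x \<noteq> r" using Suc.prems(1) by (metis funpow_0 zero_less_Suc)
  have px: "p x \<in> V" using assms(2) Suc.prems(2) x by blast
  have "\<forall>i<k. (p ^^ i) (p x) \<in> V \<and> (p ^^ i) (p x) \<noteq> r"
    using Suc.prems(1) by (metis Suc_less_eq funpow_Suc_right o_apply)
  then have ih: "walk (ptree V r p) (pw p (p x) k) \<and> set (pw p (p x) k) \<subseteq> V"
    using Suc.IH px by blast
  have "{x, p x} \<in> ptree V r p" unfolding ptree_def using Suc.prems(2) x by blast
  then show ?case using ih Suc.prems(2) by (simp add: walk_Cons)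
qed

lemma ptree_dir:
  fixes h :: "'a \<Rightarrow> nat"
  assumes "{a, b} \<in> ptree V r p" "h b \<le> h a" "\<forall>y\<in>V. y \<noteq> r \<longrightarrow> h (p y) + 1 = h y"
  shows "b = p a"
proof -
  obtain x where x: "{a,b} = {x, p x}" "x \<in> V" "x \<noteq> r" using assms(1) unfolding ptree_def by blast
  then have hx: "h (p x) + 1 = h x" using assms(3) by blast
  from x(1) have "(a = x \<and> b = p x) \<or> (a = p x \<and> b = x)" by (auto simp: doubleton_eq_iff)
  then show ?thesis using hx assms(2) by auto
qed

lemma ptree_acyclic:
  fixes h :: "'a \<Rightarrow> nat"
  assumes pV: "\<forall>y\<in>V. y \<noteq> r \<longrightarrow> p y \<in> V"
    and hp: "\<forall>y\<in>V. y \<noteq> r \<longrightarrow> h (p y) + 1 = h y"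
  shows "\<not> has_cycle (ptree V r p)"
proof
  assume "has_cycle (ptree V r p)"
  then obtain xs where xs: "length xs \<ge> 3" "distinct xs" "walk (ptree V r p) (xs @ [hd xs])"
    unfolding has_cycle_def by blast
  define n where "n = length xs"
  define T where "T = ptree V r p"
  have n3: "n \<ge> 3" using xs n_def by simp
  have "xs \<noteq> []" using n3 n_def by auto
  have ed: "{xs ! i, xs ! (Suc i mod n)} \<in> T" if i: "i < n" for i
  proof -
    have "{(xs @ [hd xs]) ! i, (xs @ [hd xs]) ! Suc i} \<in> T"
      using xs(3) i unfolding walk_def T_def n_def by simp
    moreover have "(xs @ [hd xs]) ! i = xs ! i" using i by (simp add: nth_append n_def)
    moreover have "(xs @ [hd xs]) ! Suc i = xs ! (Suc i mod n)"
    proof (cases "Suc i < n")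
      case True then show ?thesis by (simp add: nth_append n_def)
    next
      case False then have "Suc i = n" using i by simp
      then show ?thesis using n3 \<open>xs \<noteq> []\<close> by (simp add: nth_append n_def hd_conv_nth)
    qed
    ultimately show ?thesis by simp
  qed
  define M where "M = Max (h ` set xs)"
  have "M \<in> h ` set xs" unfolding M_def using \<open>xs \<noteq> []\<close> by (intro Max_in) auto
  then obtain y where y: "y \<in> set xs" "h y = M" by blast
  then obtain k where k: "k < n" "h (xs ! k) = M" unfolding n_def by (metis in_set_conv_nth)
  have mx: "h (xs ! i) \<le> h (xs ! k)" if "i < n" for i
  proof -
    have "h (xs ! i) \<in> h ` set xs" using that unfolding n_def by simp
    then have "h (xs ! i) \<le> M" unfolding M_def by (intro Max_ge) auto
    then show ?thesis using k by simp
  qed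
  define j where "j = (if k = 0 then n - 1 else k - 1)"
  define l where "l = (if Suc k < n then Suc k else 0)"
  have jn': "j < n \<and> Suc j mod n = k"
  proof (cases "k = 0")
    case True then show ?thesis using n3 unfolding j_def by simp
  next
    case False then show ?thesis using k(1) unfolding j_def by simp
  qed
  then have jn: "j < n" "Suc j mod n = k" by auto
  have ln': "l < n \<and> Suc k mod n = l"
  proof (cases "Suc k < n")
    case True then show ?thesis unfolding l_def by simp
  next
    case False then have "Suc k = n" using k(1) by simp
    then show ?thesis using n3 unfolding l_def by simp
  qed
  then have ln: "l < n" "Suc k mod n = l" by auto
  have jl: "j \<noteq> l" using k(1) n3 unfolding j_def l_def by (simp split: if_splits; arith)
  have e1: "{xs ! k, xs ! l} \<in> T" using ed[OF k(1)] ln by simp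
  have e2: "{xs ! k, xs ! j} \<in> T" using ed[OF jn(1)] jn by (simp add: insert_commute)
  have "xs ! l = p (xs ! k)" using ptree_dir[OF e1[unfolded T_def] mx[OF ln(1)] hp] .
  moreover have "xs ! j = p (xs ! k)" using ptree_dir[OF e2[unfolded T_def] mx[OF jn(1)] hp] .
  ultimately have "xs ! l = xs ! j" by simp
  then have "l = j" using xs(2) jn ln by (simp add: nth_eq_iff_index_eq n_def)
  then show False using jl by simp
qed

lemma ptree_iter:
  fixes h :: "'a \<Rightarrow> nat"
  assumes pV: "\<forall>y\<in>V. y \<noteq> r \<longrightarrow> p y \<in> V"
    and hp: "\<forall>y\<in>V. y \<noteq> r \<longrightarrow> h (p y) + 1 = h y"
    and x: "x \<in> V" and hr: "h r = 0"
  shows "i \<le> h x \<Longrightarrow> (p ^^ i) x \<in> V \<and> h ((p ^^ i) x) = h x - i"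
proof (induction i)
  case 0 then show ?case using x by simp
next
  case (Suc i)
  then have a: "(p ^^ i) x \<in> V" "h ((p ^^ i) x) = h x - i" by auto
  then have "(p ^^ i) x \<noteq> r" using Suc.prems hr by auto
  then have "p ((p ^^ i) x) \<in> V" "h (p ((p ^^ i) x)) + 1 = h ((p ^^ i) x)" using a pV hp by blast+
  then show ?case using a Suc.prems by simp
qed

lemma ptree_connected:
  fixes h :: "'a \<Rightarrow> nat"
  assumes pV: "\<forall>y\<in>V. y \<noteq> r \<longrightarrow> p y \<in> V"
    and hp: "\<forall>y\<in>V. y \<noteq> r \<longrightarrow> h (p y) + 1 = h y"
    and r: "r \<in> V" and hr: "h r = 0" and h0: "\<forall>y\<in>V. h y = 0 \<longrightarrow> y = r"
  shows "connected_graph V (ptree V r p)"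
proof -
  have toroot: "walk (ptree V r p) (pw p x (h x)) \<and> set (pw p x (h x)) \<subseteq> V \<and> last (pw p x (h x)) = r"
    if x: "x \<in> V" for x
  proof -
    have it: "\<And>i. i \<le> h x \<Longrightarrow> (p ^^ i) x \<in> V \<and> h ((p ^^ i) x) = h x - i"
      using ptree_iter[OF pV hp x hr] by blast
    have "\<forall>i<h x. (p ^^ i) x \<in> V \<and> (p ^^ i) x \<noteq> r"
    proof (intro allI impI)
      fix i assume "i < h x"
      then show "(p ^^ i) x \<in> V \<and> (p ^^ i) x \<noteq> r" using it[of i] hr by auto
    qed
    then have "walk (ptree V r p) (pw p x (h x)) \<and> set (pw p x (h x)) \<subseteq> V"
      using pw_walk[OF _ pV x] by blast
    moreover have "last (pw p x (h x)) = r" using it[of "h x"] h0 by (simp add: pw_last)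
    ultimately show ?thesis by blast
  qed
  show ?thesis unfolding connected_graph_def
  proof (intro conjI ballI)
    show "V \<noteq> {}" using r by blast
  next
    fix u v assume u: "u \<in> V" and v: "v \<in> V"
    let ?A = "pw p u (h u)" and ?B = "rev (pw p v (h v))"
    have wa: "walk (ptree V r p) ?A" and wb: "walk (ptree V r p) ?B"
      using toroot[OF u] toroot[OF v] walk_rev by blast+
    have lh: "last ?A = hd ?B" using toroot[OF u] toroot[OF v] by (simp add: hd_rev)
    have "walk (ptree V r p) (?A @ tl ?B)" using walk_append[OF wa wb lh] .
    moreover have "hd (?A @ tl ?B) = u" by (simp add: hd_append)
    moreover have "last (?A @ tl ?B) = v"
    proof (cases "tl ?B = []")
      case True
      then have "?B = [hd ?B]" by (metis list.collapse rev_is_Nil_conv pw_len length_0_conv nat.distinct(1))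
      then have "last ?B = hd ?B" by (metis last_ConsL)
      then show ?thesis using True lh by (simp add: last_rev)
    next
      case False
      then have "last (tl ?B) = last ?B" by (simp add: last_tl)
      then show ?thesis using False by (simp add: last_rev)
    qed
    moreover have "set (tl ?B) \<subseteq> set ?B" by (cases ?B) auto
    moreover have "set (?A @ tl ?B) \<subseteq> V" using toroot[OF u] toroot[OF v] calculation(4)
      by auto
    ultimately show "\<exists>xs. walk_betw (ptree V r p) u xs v \<and> set xs \<subseteq> V"
      unfolding walk_betw_def by blast
  qed
qed




definition gm :: "nat list \<Rightarrow> nat" where "gm ns = length ns - 1"
definition cc :: "nat list \<Rightarrow> nat \<Rightarrow> nat" where "cc ns i = (ns ! i + 1) div 2"
definition dd :: "nat \<Rightarrow> nat \<Rightarrow> nat" where "dd a b = (if a \<le> b then b - a else a - b)"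
definition off :: "nat list \<Rightarrow> (nat \<Rightarrow> nat) \<Rightarrow> nat" where
  "off ns x = (\<Sum>i<gm ns. dd (x i) (cc ns i))"
definition groot :: "nat list \<Rightarrow> nat \<Rightarrow> nat" where
  "groot ns = (\<lambda>i. if i < gm ns then cc ns i else if i = gm ns then 1 else 0)"
definition gp :: "nat list \<Rightarrow> (nat \<Rightarrow> nat) \<Rightarrow> (nat \<Rightarrow> nat)" where
  "gp ns x = (if \<exists>j<gm ns. x j \<noteq> cc ns j then
     (let j = LEAST j. j < gm ns \<and> x j \<noteq> cc ns j in
        x(j := if x j < cc ns j then Suc (x j) else x j - 1))
     else x(gm ns := x (gm ns) - 1))"
definition gh :: "nat list \<Rightarrow> (nat \<Rightarrow> nat) \<Rightarrow> nat" where
  "gh ns x = off ns x + (x (gm ns) - 1)"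

lemma dd0[simp]: "dd a b = 0 \<longleftrightarrow> a = b" by (auto simp: dd_def)

lemma dd_half: "1 \<le> (a::nat) \<Longrightarrow> a \<le> n \<Longrightarrow> dd a ((n+1) div 2) \<le> n div 2"
  unfolding dd_def by (cases "a \<le> (n+1) div 2"; simp; presburger)

lemma edge_mem:
  assumes "x \<in> grid_vertices ns" "y \<in> grid_vertices ns" "i < length ns" "x i + 1 = y i"
    "\<forall>j. j \<noteq> i \<longrightarrow> x j = y j"
  shows "{x, y} \<in> grid_edges ns"
  using assms unfolding grid_edges_def by blast

context
  fixes ns :: "nat list"
  assumes len: "1 \<le> length ns" and ge2: "\<forall>i<length ns. 2 \<le> ns ! i"
begin

lemma m_lt: "gm ns < length ns" using len by (simp add: gm_def)

lemma Vmem: "x \<in> grid_vertices ns \<longleftrightarrow>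
   (\<forall>i<length ns. 1 \<le> x i \<and> x i \<le> ns ! i) \<and> (\<forall>i\<ge>length ns. x i = 0)"
  by (simp add: grid_vertices_def)

lemma c_bd: "i < length ns \<Longrightarrow> 1 \<le> cc ns i \<and> cc ns i \<le> ns ! i"
  using ge2 unfolding cc_def by force

lemma dd_bd: "x \<in> grid_vertices ns \<Longrightarrow> i < length ns \<Longrightarrow> dd (x i) (cc ns i) \<le> ns ! i div 2"
  unfolding Vmem cc_def by (intro dd_half) auto

lemma off_le: "x \<in> grid_vertices ns \<Longrightarrow> off ns x \<le> (\<Sum>i<gm ns. ns ! i div 2)"
  unfolding off_def using m_lt by (intro sum_mono dd_bd) auto

lemma off0: "off ns x = 0 \<longleftrightarrow> (\<forall>j<gm ns. x j = cc ns j)"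
  unfolding off_def by auto

lemma off_upd: "j < gm ns \<Longrightarrow> off ns (x(j := a)) + dd (x j) (cc ns j) = off ns x + dd a (cc ns j)"
proof -
  assume j: "j < gm ns"
  have "off ns (x(j := a)) = dd a (cc ns j) + (\<Sum>i\<in>{..<gm ns} - {j}. dd ((x(j := a)) i) (cc ns i))"
    unfolding off_def using j by (subst sum.remove[of _ j]) auto
  moreover have "off ns x = dd (x j) (cc ns j) + (\<Sum>i\<in>{..<gm ns} - {j}. dd (x i) (cc ns i))"
    unfolding off_def using j by (subst sum.remove[of _ j]) auto
  moreover have "(\<Sum>i\<in>{..<gm ns} - {j}. dd ((x(j := a)) i) (cc ns i)) = (\<Sum>i\<in>{..<gm ns} - {j}. dd (x i) (cc ns i))"
    by (rule sum.cong) auto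
  ultimately show ?thesis by simp
qed

lemma off_updm: "off ns (x(gm ns := a)) = off ns x"
  unfolding off_def by (rule sum.cong) auto

lemma step_off:
  assumes x: "x \<in> grid_vertices ns" and o: "off ns x > 0"
  shows "gp ns x \<in> grid_vertices ns \<and> off ns (gp ns x) + 1 = off ns x \<and> gp ns x (gm ns) = x (gm ns)
     \<and> {x, gp ns x} \<in> grid_edges ns"
proof -
  have ex: "\<exists>j<gm ns. x j \<noteq> cc ns j"
  proof (rule ccontr)
    assume "\<not> ?thesis"
    then have "off ns x = 0" using off0 by auto
    with o show False by simp
  qed
  define j where "j = (LEAST j. j < gm ns \<and> x j \<noteq> cc ns j)"
  have j0: "j < gm ns \<and> x j \<noteq> cc ns j" unfolding j_def by (rule LeastI_ex) (use ex in blast)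
  then have j: "j < gm ns" "x j \<noteq> cc ns j" by blast+
  define a where "a = (if x j < cc ns j then Suc (x j) else x j - 1)"
  have gpx: "gp ns x = x(j := a)" unfolding gp_def if_P[OF ex] Let_def a_def j_def by (rule refl)
  have jl: "j < length ns" using j m_lt by simp
  have xj: "1 \<le> x j" "x j \<le> ns ! j" using x jl unfolding Vmem by auto
  have cj: "1 \<le> cc ns j" "cc ns j \<le> ns ! j" using c_bd jl by auto
  have a: "1 \<le> a" "a \<le> ns ! j" using xj cj j(2) unfolding a_def by auto
  have dda: "dd a (cc ns j) + 1 = dd (x j) (cc ns j)" using j(2) unfolding a_def dd_def by auto
  have V: "x(j := a) \<in> grid_vertices ns" using x a jl unfolding Vmem by auto
  have jm: "j \<noteq> gm ns" using j by simp
  have E: "{x, x(j := a)} \<in> grid_edges ns"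
  proof (cases "x j < cc ns j")
    case True
    show ?thesis by (rule edge_mem[OF x V jl]) (use True in \<open>auto simp: a_def\<close>)
  next
    case False
    then have "x j - 1 + 1 = x j" using xj by simp
    have "{x(j := a), x} \<in> grid_edges ns" by (rule edge_mem[OF V x jl]) (use False xj in \<open>auto simp: a_def\<close>)
    then show ?thesis by (simp add: insert_commute)
  qed
  have o2: "off ns (x(j := a)) + 1 = off ns x" using off_upd[OF j(1), of x a] dda by linarith
  have m2: "(x(j := a)) (gm ns) = x (gm ns)" using jm by simp
  show ?thesis unfolding gpx using V E o2 m2 by blast
qed

lemma step_sp:
  assumes x: "x \<in> grid_vertices ns" and o: "off ns x = 0" and xm: "2 \<le> x (gm ns)"
  shows "gp ns x = x(gm ns := x (gm ns) - 1) \<and> gp ns x \<in> grid_vertices ns \<and> off ns (gp ns x) = 0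
     \<and> {x, gp ns x} \<in> grid_edges ns"
proof -
  have ne: "\<not> (\<exists>j<gm ns. x j \<noteq> cc ns j)" using o off0 by auto
  define y where "y = x(gm ns := x (gm ns) - 1)"
  have gpx: "gp ns x = y" unfolding gp_def y_def if_not_P[OF ne] ..
  have V: "y \<in> grid_vertices ns" using x xm m_lt unfolding Vmem y_def by auto
  have "{y, x} \<in> grid_edges ns" using edge_mem[OF V x m_lt] xm unfolding y_def by auto
  then show ?thesis using gpx V o off_updm unfolding y_def by (simp add: insert_commute)
qed

lemma root_V: "groot ns \<in> grid_vertices ns"
  unfolding Vmem groot_def using c_bd m_lt ge2 by (auto simp: gm_def)

lemma root_off: "off ns (groot ns) = 0" unfolding off0 groot_def by simp

lemma uniq:
  assumes "y \<in> grid_vertices ns" "z \<in> grid_vertices ns" "off ns y = 0" "off ns z = 0" "y (gm ns) = z (gm ns)"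
  shows "y = z"
proof
  fix i
  show "y i = z i"
  proof (cases "i < gm ns")
    case True then show ?thesis using assms(3,4) off0 by auto
  next
    case False
    then have "i = gm ns \<or> i \<ge> length ns" using len by (auto simp: gm_def)
    then show ?thesis using assms(1,2,5) unfolding Vmem by auto
  qed
qed

lemma root_iff: "x \<in> grid_vertices ns \<Longrightarrow> x = groot ns \<longleftrightarrow> off ns x = 0 \<and> x (gm ns) = 1"
proof -
  assume x: "x \<in> grid_vertices ns"
  have rm: "groot ns (gm ns) = 1" by (simp add: groot_def)
  show ?thesis
  proof
    assume "x = groot ns" then show "off ns x = 0 \<and> x (gm ns) = 1" using root_off rm by simp
  next
    assume "off ns x = 0 \<and> x (gm ns) = 1"
    then show "x = groot ns" using uniq[OF x root_V _ root_off] rm by simp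
  qed
qed

lemma xm1: "x \<in> grid_vertices ns \<Longrightarrow> 1 \<le> x (gm ns)"
  using m_lt unfolding Vmem by auto

lemma pV: "\<forall>y\<in>grid_vertices ns. y \<noteq> groot ns \<longrightarrow> gp ns y \<in> grid_vertices ns \<and> gh ns (gp ns y) + 1 = gh ns y
   \<and> {y, gp ns y} \<in> grid_edges ns"
proof (intro ballI impI)
  fix y assume y: "y \<in> grid_vertices ns" "y \<noteq> groot ns"
  show "gp ns y \<in> grid_vertices ns \<and> gh ns (gp ns y) + 1 = gh ns y \<and> {y, gp ns y} \<in> grid_edges ns"
  proof (cases "off ns y = 0")
    case True
    have "y (gm ns) \<noteq> 1" using root_iff[OF y(1)] True y(2) by blast
    then have y2: "2 \<le> y (gm ns)" using xm1[OF y(1)] by linarith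
    have s: "gp ns y = y(gm ns := y (gm ns) - 1)" "gp ns y \<in> grid_vertices ns" "off ns (gp ns y) = 0"
      "{y, gp ns y} \<in> grid_edges ns" using step_sp[OF y(1) True y2] by blast+
    have "gp ns y (gm ns) = y (gm ns) - 1" using s(1) by simp
    then have "gh ns (gp ns y) + 1 = gh ns y" unfolding gh_def using s(3) True y2 by simp
    then show ?thesis using s by blast
  next
    case False
    then have "off ns y > 0" by simp
    then have s: "gp ns y \<in> grid_vertices ns" "off ns (gp ns y) + 1 = off ns y" "gp ns y (gm ns) = y (gm ns)"
      "{y, gp ns y} \<in> grid_edges ns" using step_off[OF y(1)] by blast+
    have "gh ns (gp ns y) + 1 = gh ns y" unfolding gh_def using s(2,3) by simp
    then show ?thesis using s by blast
  qed
qed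

lemma gh0: "\<forall>y\<in>grid_vertices ns. gh ns y = 0 \<longrightarrow> y = groot ns"
proof (intro ballI impI)
  fix y assume y: "y \<in> grid_vertices ns" "gh ns y = 0"
  then have "off ns y = 0" "y (gm ns) - 1 = 0" unfolding gh_def by auto
  moreover have "1 \<le> y (gm ns)" using xm1[OF y(1)] .
  ultimately show "y = groot ns" using root_iff[OF y(1)] by simp
qed

lemma ghr: "gh ns (groot ns) = 0" using root_off unfolding gh_def groot_def by simp

end



lemma walk_join:
  assumes "walk E A" "walk E B" "last A = last B"
  shows "walk_betw E (hd A) (A @ tl (rev B)) (hd B) \<and> length (A @ tl (rev B)) = length A + length B - 1"
proof -
  have ne: "A \<noteq> []" "B \<noteq> []" using assms by (auto simp: walk_def)
  have wb: "walk E (rev B)" using walk_rev[OF assms(2)] .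
  have lh: "last A = hd (rev B)" using assms(3) ne by (simp add: hd_rev)
  have w: "walk E (A @ tl (rev B))" using walk_append[OF assms(1) wb lh] .
  have h: "hd (A @ tl (rev B)) = hd A" using ne by simp
  have l: "last (A @ tl (rev B)) = hd B"
  proof (cases "tl (rev B) = []")
    case True
    then have "rev B = [hd (rev B)]" using ne by (metis list.collapse rev_is_Nil_conv)
    then have "last (rev B) = hd (rev B)" by (metis last_ConsL)
    then show ?thesis using True lh ne by (simp add: last_rev hd_rev)
  next
    case False
    then have "last (tl (rev B)) = last (rev B)" by (simp add: last_tl)
    then show ?thesis using False ne by (simp add: last_rev)
  qed
  have "length B \<ge> 1" using ne by (cases B) auto
  then have "length (A @ tl (rev B)) = length A + length B - 1" by simp
  then show ?thesis using w h l unfolding walk_betw_def by blast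
qed

lemma walk_betw_rev: "walk_betw E u xs v \<Longrightarrow> walk_betw E v (rev xs) u"
  unfolding walk_betw_def using walk_rev
  by (metis hd_rev last_rev walk_def)

context
  fixes ns :: "nat list"
  assumes len: "1 \<le> length ns" and ge2: "\<forall>i<length ns. 2 \<le> ns ! i"
begin

abbreviation "VV \<equiv> grid_vertices ns"
abbreviation "TT \<equiv> ptree (grid_vertices ns) (groot ns) (gp ns)"
abbreviation "SS \<equiv> (\<Sum>i<gm ns. ns ! i div 2)"

lemma pV1: "\<forall>y\<in>VV. y \<noteq> groot ns \<longrightarrow> gp ns y \<in> VV" using pV[OF len ge2] by blast
lemma hp1: "\<forall>y\<in>VV. y \<noteq> groot ns \<longrightarrow> gh ns (gp ns y) + 1 = gh ns y" using pV[OF len ge2] by blast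

lemma span: "spanning_tree VV (grid_edges ns) TT"
  unfolding spanning_tree_def
proof (intro conjI)
  show "TT \<subseteq> grid_edges ns" unfolding ptree_def using pV[OF len ge2] by blast
  show "connected_graph VV TT"
    by (rule ptree_connected[OF pV1 hp1 root_V[OF len ge2] ghr[OF len ge2] gh0[OF len ge2]])
  show "\<not> has_cycle TT" by (rule ptree_acyclic[OF pV1 hp1])
qed

lemma iter_off: "x \<in> VV \<Longrightarrow> i \<le> off ns x \<Longrightarrow>
   (gp ns ^^ i) x \<in> VV \<and> off ns ((gp ns ^^ i) x) = off ns x - i \<and> (gp ns ^^ i) x (gm ns) = x (gm ns)"
proof (induction i)
  case 0 then show ?case by simp
next
  case (Suc i)
  then have a: "(gp ns ^^ i) x \<in> VV" "off ns ((gp ns ^^ i) x) = off ns x - i" "(gp ns ^^ i) x (gm ns) = x (gm ns)"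
    by auto
  then have "off ns ((gp ns ^^ i) x) > 0" using Suc.prems by simp
  from step_off[OF len ge2 a(1) this] have s: "gp ns ((gp ns ^^ i) x) \<in> VV"
    "off ns (gp ns ((gp ns ^^ i) x)) + 1 = off ns ((gp ns ^^ i) x)" "gp ns ((gp ns ^^ i) x) (gm ns) = (gp ns ^^ i) x (gm ns)"
    by blast+
  have "off ns (gp ns ((gp ns ^^ i) x)) = off ns x - Suc i" using s(2) a(2) by linarith
  then show ?case using s a by simp
qed

lemma spine:
  assumes x: "x \<in> VV"
  shows "walk TT (pw (gp ns) x (off ns x)) \<and> (gp ns ^^ off ns x) x \<in> VV \<and> off ns ((gp ns ^^ off ns x) x) = 0
    \<and> (gp ns ^^ off ns x) x (gm ns) = x (gm ns)"
proof -
  have "\<forall>i<off ns x. (gp ns ^^ i) x \<in> VV \<and> (gp ns ^^ i) x \<noteq> groot ns"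
  proof (intro allI impI)
    fix i assume i: "i < off ns x"
    then have "(gp ns ^^ i) x \<in> VV" "off ns ((gp ns ^^ i) x) > 0" using iter_off[OF x, of i] by auto
    then show "(gp ns ^^ i) x \<in> VV \<and> (gp ns ^^ i) x \<noteq> groot ns" using root_off[OF len ge2] by auto
  qed
  then have "walk TT (pw (gp ns) x (off ns x))" using pw_walk[OF _ pV1 x] by blast
  then show ?thesis using iter_off[OF x, of "off ns x"] by simp
qed

lemma adj_bound:
  assumes x: "x \<in> VV" and y: "y \<in> VV" and i: "i < length ns" and xy: "x i + 1 = y i"
    and oth: "\<forall>j. j \<noteq> i \<longrightarrow> x j = y j"
  shows "gdist TT x y \<le> 2 * SS + 1 \<and> gdist TT y x \<le> 2 * SS + 1"
proof -
  have ox: "off ns x \<le> SS" using off_le[OF len ge2 x] .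
  have oy: "off ns y \<le> SS" using off_le[OF len ge2 y] .
  obtain W where W: "walk_betw TT x W y" "length W \<le> 2 * SS + 2"
  proof (cases "i < gm ns")
    case True
    have m: "x (gm ns) = y (gm ns)" using oth True by simp
    have sx: "walk TT (pw (gp ns) x (off ns x))" "(gp ns ^^ off ns x) x \<in> VV" "off ns ((gp ns ^^ off ns x) x) = 0"
       "(gp ns ^^ off ns x) x (gm ns) = x (gm ns)" using spine[OF x] by blast+
    have sy: "walk TT (pw (gp ns) y (off ns y))" "(gp ns ^^ off ns y) y \<in> VV" "off ns ((gp ns ^^ off ns y) y) = 0"
       "(gp ns ^^ off ns y) y (gm ns) = y (gm ns)" using spine[OF y] by blast+
    have eq: "(gp ns ^^ off ns x) x = (gp ns ^^ off ns y) y"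
      using uniq[OF len ge2 sx(2) sy(2) sx(3) sy(3)] sx(4) sy(4) m by simp
    have "last (pw (gp ns) x (off ns x)) = last (pw (gp ns) y (off ns y))" using eq by (simp add: pw_last)
    from walk_join[OF sx(1) sy(1) this] have
      "walk_betw TT x (pw (gp ns) x (off ns x) @ tl (rev (pw (gp ns) y (off ns y)))) y"
      "length (pw (gp ns) x (off ns x) @ tl (rev (pw (gp ns) y (off ns y)))) = Suc (off ns x) + Suc (off ns y) - 1"
      by simp_all
    then show ?thesis using that ox oy by fastforce
  next
    case False
    then have im: "i = gm ns" using i by (simp add: gm_def)
    have oe: "off ns x = off ns y" unfolding off_def using oth im by (intro sum.cong) auto
    have sx: "walk TT (pw (gp ns) x (off ns x))" "(gp ns ^^ off ns x) x \<in> VV" "off ns ((gp ns ^^ off ns x) x) = 0"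
       "(gp ns ^^ off ns x) x (gm ns) = x (gm ns)" using spine[OF x] by blast+
    define sy where "sy = (gp ns ^^ off ns y) y"
    have sy: "sy \<in> VV" "off ns sy = 0" "sy (gm ns) = y (gm ns)" using spine[OF y] unfolding sy_def by blast+
    have y2: "2 \<le> sy (gm ns)" using sy(3) xy im xm1[OF len ge2 x] by simp
    have st: "gp ns sy = sy(gm ns := sy (gm ns) - 1)" "gp ns sy \<in> VV" "off ns (gp ns sy) = 0"
      using step_sp[OF len ge2 sy(1) sy(2) y2] by blast+
    have eq: "(gp ns ^^ off ns x) x = gp ns sy"
      using uniq[OF len ge2 sx(2) st(2) sx(3) st(3)] sx(4) st(1) sy(3) xy im by simp
    have "\<forall>k<Suc (off ns y). (gp ns ^^ k) y \<in> VV \<and> (gp ns ^^ k) y \<noteq> groot ns"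
    proof (intro allI impI)
      fix k assume k: "k < Suc (off ns y)"
      show "(gp ns ^^ k) y \<in> VV \<and> (gp ns ^^ k) y \<noteq> groot ns"
      proof (cases "k < off ns y")
        case True
        then have "(gp ns ^^ k) y \<in> VV" "off ns ((gp ns ^^ k) y) > 0" using iter_off[OF y, of k] by auto
        then show ?thesis using root_off[OF len ge2] by auto
      next
        case False
        then have "k = off ns y" using k by simp
        then have "(gp ns ^^ k) y = sy" unfolding sy_def by simp
        moreover have "sy \<noteq> groot ns" using y2 root_iff[OF len ge2 sy(1)] by auto
        ultimately show ?thesis using sy(1) by simp
      qed
    qed
    then have wy: "walk TT (pw (gp ns) y (Suc (off ns y)))" using pw_walk[OF _ pV1 y] by blast
    have "(gp ns ^^ Suc (off ns y)) y = gp ns sy" unfolding sy_def by (simp only: funpow.simps(2) o_apply)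
    then have "last (pw (gp ns) x (off ns x)) = last (pw (gp ns) y (Suc (off ns y)))"
      using eq by (simp only: pw_last)
    from walk_join[OF sx(1) wy this] have
      "walk_betw TT x (pw (gp ns) x (off ns x) @ tl (rev (pw (gp ns) y (Suc (off ns y))))) y"
      "length (pw (gp ns) x (off ns x) @ tl (rev (pw (gp ns) y (Suc (off ns y))))) = Suc (off ns x) + Suc (Suc (off ns y)) - 1"
      by simp_all
    then show ?thesis using that ox oy by fastforce
  qed
  have "gdist TT x y \<le> length W - 1" using gdist_le[OF W(1)] .
  moreover have "gdist TT y x \<le> length (rev W) - 1" using gdist_le[OF walk_betw_rev[OF W(1)]] .
  ultimately show ?thesis using W(2) by (simp only: length_rev) linarith
qed

lemma stretch_bd: "stretch (grid_edges ns) TT \<le> 2 * SS + 1"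
proof -
  define A where "A = {gdist TT u v | u v. {u, v} \<in> grid_edges ns \<and> u \<noteq> v}"
  have bd: "\<forall>a\<in>A. a \<le> 2 * SS + 1"
  proof
    fix a assume "a \<in> A"
    then obtain u v where uv: "a = gdist TT u v" "{u, v} \<in> grid_edges ns" unfolding A_def by blast
    then obtain x y i where xy: "{u, v} = {x, y}" "x \<in> VV" "y \<in> VV" "i < length ns" "x i + 1 = y i"
      "\<forall>j. j \<noteq> i \<longrightarrow> x j = y j" unfolding grid_edges_def by blast
    have b: "gdist TT x y \<le> 2 * SS + 1 \<and> gdist TT y x \<le> 2 * SS + 1" using adj_bound[OF xy(2-6)] .
    from xy(1) have "(u = x \<and> v = y) \<or> (u = y \<and> v = x)" by (auto simp: doubleton_eq_iff)
    then show "a \<le> 2 * SS + 1" using b uv(1) by auto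
  qed
  define y0 where "y0 = (groot ns)(gm ns := 2)"
  have rV: "groot ns \<in> VV" using root_V[OF len ge2] .
  have rm: "groot ns (gm ns) = 1" by (simp add: groot_def)
  have n2: "2 \<le> ns ! gm ns" using ge2 m_lt[OF len ge2] by blast
  have y0V: "y0 \<in> VV" using rV m_lt[OF len ge2] n2 unfolding Vmem[OF len ge2] y0_def by auto
  have "{groot ns, y0} \<in> grid_edges ns"
    by (rule edge_mem[OF rV y0V m_lt[OF len ge2]]) (auto simp: y0_def rm)
  moreover have "groot ns \<noteq> y0" using rm by (auto simp: y0_def fun_eq_iff)
  ultimately have "gdist TT (groot ns) y0 \<in> A" unfolding A_def by blast
  then have ne: "A \<noteq> {}" by blast
  have fin: "finite A" using bd by (intro finite_subset[of A "{..2 * SS + 1}"]) auto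
  have "Max A \<le> 2 * SS + 1" using bd fin ne by (simp add: Max_le_iff)
  then show ?thesis unfolding stretch_def A_def .
qed

lemma finite_V: "finite VV"
proof -
  define f where "f = (\<lambda>x::nat \<Rightarrow> nat. map x [0..<length ns])"
  have inj: "inj_on f VV"
  proof
    fix x y assume x: "x \<in> VV" and y: "y \<in> VV" and e: "f x = f y"
    show "x = y"
    proof
      fix i show "x i = y i"
      proof (cases "i < length ns")
        case True
        then have "f x ! i = f y ! i" using e by simp
        then show ?thesis using True unfolding f_def by simp
      next
        case False then show ?thesis using x y unfolding Vmem[OF len ge2] by auto
      qed
    qed
  qed
  have "f ` VV \<subseteq> {xs. set xs \<subseteq> {..sum_list ns} \<and> length xs = length ns}"
  proof
    fix z assume "z \<in> f ` VV"
    then obtain x where x: "x \<in> VV" "z = f x" by blast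
    have "\<forall>i<length ns. x i \<le> sum_list ns"
      using x(1) elem_le_sum_list[of _ ns] unfolding Vmem[OF len ge2] by (meson le_trans)
    then show "z \<in> {xs. set xs \<subseteq> {..sum_list ns} \<and> length xs = length ns}"
      using x(2) unfolding f_def by auto
  qed
  then have "finite (f ` VV)" by (rule finite_subset) (rule finite_lists_length_eq, simp)
  then show ?thesis using inj by (simp add: finite_image_iff)
qed

lemma main_bd: "tree_spanner_index VV (grid_edges ns) \<le> 2 * SS + 1"
proof -
  have fE: "finite (grid_edges ns)"
  proof (rule finite_subset)
    show "grid_edges ns \<subseteq> (\<lambda>(x, y). {x, y}) ` (VV \<times> VV)" unfolding grid_edges_def by auto
    show "finite ((\<lambda>(x, y). {x, y}) ` (VV \<times> VV))" using finite_V by simp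
  qed
  define B where "B = {stretch (grid_edges ns) T | T. spanning_tree VV (grid_edges ns) T}"
  have "B \<subseteq> stretch (grid_edges ns) ` Pow (grid_edges ns)" unfolding B_def spanning_tree_def by auto
  then have fB: "finite B" using fE by (meson finite_Pow_iff finite_imageI finite_subset)
  have "stretch (grid_edges ns) TT \<in> B" unfolding B_def using span by blast
  then have "Min B \<le> stretch (grid_edges ns) TT" using fB by simp
  then show ?thesis using stretch_bd unfolding tree_spanner_index_def B_def by linarith
qed

end

theorem lemma4p1:
  fixes ns :: "nat list"
  assumes "length ns \<ge> 1"
    and "\<forall>i<length ns. 2 \<le> ns ! i"
    and "sorted ns"
  shows "tree_spanner_index (grid_vertices ns) (grid_edges ns)
           \<le> 2 * (\<Sum>i<length ns - 1. ns ! i div 2) + 1"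
  using main_bd[OF assms(1,2)] by (simp add: gm_def)


end
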